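(* Every LAD-AG-groupoid $S$ is paramedial, i.e. $(ab)(cd)=(db)(ca)$ for all $a,b,c,d\in S$, and is left nuclear square, i.e. $a^2(bc)=(a^2b)c$ for all $a,b,c\in S$, where $a^2=aa$.
   Context: A groupoid is a set $S$ with a binary operation written as juxtaposition; $ab\cdot c$ means $(ab)c$ and $a\cdot bc$ means $a(bc)$. An AG-groupoid is a groupoid satisfying the left invertive law $(ab)c=(cb)a$ for all $a,b,c\in S$. An LAD-AG-groupoid (left abelian distributive AG-groupoid) is an AG-groupoid satisfying $a(bc)=(ab)(ca)$ for all $a,b,c\in S$. *)

theory Defs
  imports Main
begin

definition AG_groupoid :: "('a \<Rightarrow> 'a \<Rightarrow> 'a) \<Rightarrow> bool" where
  "AG_groupoid f \<longleftrightarrow> (\<forall>a b c. f (f a b) c = f (f c b) a)"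

definition LAD_AG_groupoid :: "('a \<Rightarrow> 'a \<Rightarrow> 'a) \<Rightarrow> bool" where
  "LAD_AG_groupoid f \<longleftrightarrow> AG_groupoid f \<and> (\<forall>a b c. f a (f b c) = f (f a b) (f c a))"

definition paramedial :: "('a \<Rightarrow> 'a \<Rightarrow> 'a) \<Rightarrow> bool" where
  "paramedial f \<longleftrightarrow> (\<forall>a b c d. f (f a b) (f c d) = f (f d b) (f c a))"

definition left_nuclear_square :: "('a \<Rightarrow> 'a \<Rightarrow> 'a) \<Rightarrow> bool" where
  "left_nuclear_square f \<longleftrightarrow> (\<forall>a b c. f (f a a) (f b c) = f (f (f a a) b) c)"

end

theory Submission
  imports Defs
begin

lemma S_lemma:
  assumes L: "\<And>a b c. f (f a b) c = f (f c b) a"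
      and D: "\<And>a b c. f a (f b c) = f (f a b) (f c a)"
  shows "f x (f y z) = f y (f x z)"
proof -
  have M: "\<And>a b c d. f (f a b) (f c d) = f (f a c) (f b d)" by (metis L)
  have C: "\<And>a b c. f a (f b c) = f a (f c b)" by (metis D M)
  show ?thesis
  proof -
    have f1: "\<And>a aa ab ac. f (f (f a aa) ab) ac = f (f ac a) (f ab aa)"
      by (metis (no_types) L)
    have f2: "\<And>a aa ab ac. f a (f (f aa ab) ac) = f a (f aa (f ac ab))"
      by (metis C L)
    have f3: "\<And>a aa ab. f (f a aa) (f a ab) = f a (f aa ab)"
      using C D by force
    then have f4: "\<And>a aa ab ac. f (f (f a aa) ab) (f a (f aa ac)) = f (f a aa) (f ab (f a ac))"
      by (metis (no_types))
    have f5: "\<And>a aa ab ac. f (f (f a aa) ab) (f a (f ac aa)) = f (f a aa) (f ab (f a ac))"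
      using f3 by (metis D)
    have f6: "\<And>a aa ab ac. f (f (f a aa) ab) (f a (f aa ac)) = f (f a aa) (f ab (f ac a))"
      using f3 by (metis (full_types) D)
    have f7: "\<And>a aa ab ac. f (f a aa) (f a (f ab ac)) = f a (f aa (f ac ab))"
      using f3 by (simp add: C)
    have f8: "\<And>a aa ab ac. f (f a (f aa ab)) (f (f a aa) ac) = f (f a aa) (f (f ab a) ac)"
      using f3 by (metis D)
    have f9: "\<And>a aa ab ac. f a (f aa (f ab ac)) = f a (f aa (f ac ab))"
      using f7 f3 by auto
    have "\<And>a aa ab ac. f (f a (f aa ab)) (f a (f ac aa)) = f (f a aa) (f ab (f ac a))"
      using f8 f2 by force
    then have "\<And>a aa ab ac. f (f a aa) (f ab (f ac a)) = f a (f aa (f ab ac))"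
      using f3 D by force
    then have "\<And>a aa ab ac. f (f (f a aa) ab) (f a (f aa ac)) = f a (f aa (f ab ac))"
      using f6 by auto
    then have "\<And>a aa ab ac. f (f a aa) (f ab (f a ac)) = f a (f aa (f ab ac))"
      using f4 by simp
    then have f10: "\<And>a aa ab ac. f (f (f a aa) ab) (f a (f ac aa)) = f a (f aa (f ab ac))"
      using f5 by force
    have f11: "\<And>a aa ab ac ad. f (f (f a aa) ab) (f ac ad) = f (f (f ab aa) ac) (f a ad)"
      using f1 by metis
    have "\<And>a aa ab ac. f (f (f a aa) ab) (f a (f ac aa)) = f (f a aa) (f ab ac)"
      using f3 f2 by (metis (full_types))
    then have f12: "\<And>a aa ab ac. f (f a aa) (f ab ac) = f a (f aa (f ab ac))"
      using f10 by simp
    then have f13: "\<And>a aa ab. f a (f aa (f a ab)) = f a (f aa ab)"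
      using f3 by simp
    have f14: "\<And>a aa ab. f a (f aa (f ab a)) = f a (f aa ab)"
      using f12 D by force
    have "\<And>a aa ab ac ad. f (f (f a aa) ab) (f ac ad) = f (f ab aa) (f ac (f a ad))"
      using f12 f11 by (metis (no_types))
    then have "\<And>a aa ab ac ad. f a (f aa (f ab (f ac ad))) = f ab (f aa (f ac (f a ad)))"
      using f12 by (metis (no_types))
    then have f15: "\<And>a aa ab ac. f a (f aa (f ab ac)) = f ab (f a (f aa ac))"
      using f13 by (smt (verit))
    have "\<And>a aa ab. f a (f aa (f a ab)) = f a (f aa (f aa ab))"
      using f13 by (metis (no_types))
    then have f16: "\<And>a aa ab. f a (f aa (f aa ab)) = f a (f aa ab)"
      using f13 by force
    have "\<And>a aa ab. f (f a aa) (f aa (f ab a)) = f (f a aa) (f aa ab)"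
      using f14 by (metis (full_types))
    then have "\<And>a aa ab. f a (f aa (f ab a)) = f ab (f a aa)"
      using f16 f15 f12 f9 by (metis (full_types))
    then have f17: "\<And>a aa ab. f a (f aa ab) = f ab (f a aa)"
      using f14 by force
    have "f x (f z y) = f x (f y z)"
      by (simp add: C)
    then show ?thesis
      using f17 by (metis (no_types))
  qed
qed

theorem corollary1:
  fixes f :: "'a \<Rightarrow> 'a \<Rightarrow> 'a"
  assumes "LAD_AG_groupoid f"
  shows "paramedial f \<and> left_nuclear_square f"
proof -
  have L: "\<And>a b c. f (f a b) c = f (f c b) a" and D: "\<And>a b c. f a (f b c) = f (f a b) (f c a)"
    using assms unfolding LAD_AG_groupoid_def AG_groupoid_def by auto
  have S: "\<And>x y z. f x (f y z) = f y (f x z)" using S_lemma[OF L D] by blast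
  have P: "\<And>a b c d. f (f a b) (f c d) = f (f d b) (f c a)"
  proof -
    fix a b c d
    have "f (f a b) (f c d) = f c (f (f a b) d)" by (rule S)
    also have "\<dots> = f c (f (f d b) a)" by (simp only: L)
    also have "\<dots> = f (f d b) (f c a)" by (rule S)
    finally show "f (f a b) (f c d) = f (f d b) (f c a)" .
  qed
  have N: "\<And>a b c. f (f a a) (f b c) = f (f (f a a) b) c" by (metis L D)
  show ?thesis unfolding paramedial_def left_nuclear_square_def using P N by blast
qed

end
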